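(* Under the sampling setup described in the context, the following hold: (a) If $i_u=\lceil ks/n-g\rceil$, then $\mathrm{P}[x_k^*<u]\le e^{-2g^2/s}$. (b) $\mathrm{P}[u<x_{k_l}^*]\le e^{-2g^2/s}$. (c) If $i_v=\lceil ks/n+g\rceil$, then $\mathrm{P}[v<x_k^*]\le e^{-2g^2/s}$. (d) $\mathrm{P}[x_{k_r}^*<v]\le e^{-2g^2/s}$. (e) $i_u\ne\lceil ks/n-g\rceil$ if and only if $k\le gn/s$; and $i_v\ne\lceil ks/n+g\rceil$ if and only if $n<k+gn/s$.
   Context: Sampling setup. Let $X=(x_1,\dots,x_n)$ be a list of $n\ge 2$ elements of a totally ordered set; repeated values are allowed. Let $x_1^*\le\dots\le x_n^*$ be these elements in sorted order. Let $k$ be an integer with $1\le k\le n$, let $s$ be an integer with $1\le s\le n-1$, and let $g>0$ be real. A sample is drawn by choosing a set $I\subset\{1,\dots,n\}$ of $s$ positions uniformly at random among all $s$-element subsets. The sample $S$ is the list $(x_j)_{j\in I}$, and its sorted elements are $y_1^*\le\dots\le y_s^*$. Define - $i_u:=\max\{\lceil ks/n-g\rceil,1\}$ and $i_v:=\min\{\lceil ks/n+g\rceil,s\}$; - $u:=y_{i_u}^*$ and $v:=y_{i_v}^*$; - $k_l:=\max\{\lceil k-2gn/s\rceil,1\}$ and $k_r:=\min\{\lceil k+2gn/s\rceil,n\}$. $\mathrm{P}$ denotes probability with respect to the random choice of $I$. *)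

theory Defs
  imports "HOL-Probability.Probability"
begin

text \<open>Positions are 0-based indices into the list X (so {..<n}); order statistics
  are 1-based: ostat xs i is the i-th smallest element of xs (with repetitions).\<close>

definition ostat :: "'a::linorder list \<Rightarrow> nat \<Rightarrow> 'a" where
  "ostat xs i = sort xs ! (i - 1)"

definition sample_space :: "nat \<Rightarrow> nat \<Rightarrow> nat set set" where
  "sample_space n s = {I. I \<subseteq> {..<n} \<and> card I = s}"

definition sample :: "'a list \<Rightarrow> nat set \<Rightarrow> 'a list" where
  "sample X I = map (\<lambda>j. X ! j) (sorted_list_of_set I)"

definition i_u :: "nat \<Rightarrow> nat \<Rightarrow> nat \<Rightarrow> real \<Rightarrow> int" where
  "i_u n k s g = max (\<lceil>real k * real s / real n - g\<rceil>) 1"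

definition i_v :: "nat \<Rightarrow> nat \<Rightarrow> nat \<Rightarrow> real \<Rightarrow> int" where
  "i_v n k s g = min (\<lceil>real k * real s / real n + g\<rceil>) (int s)"

definition k_l :: "nat \<Rightarrow> nat \<Rightarrow> nat \<Rightarrow> real \<Rightarrow> int" where
  "k_l n k s g = max (\<lceil>real k - 2 * g * real n / real s\<rceil>) 1"

definition k_r :: "nat \<Rightarrow> nat \<Rightarrow> nat \<Rightarrow> real \<Rightarrow> int" where
  "k_r n k s g = min (\<lceil>real k + 2 * g * real n / real s\<rceil>) (int n)"

end

theory Submission
  imports Defs "HOL-Probability.Probability"
begin

lemma choose_suc_eq: "Suc k * (n choose Suc k) = (n - k) * (n choose k)"
  using binomial_absorption[of k n] binomial_absorb_comp[of n k] by simp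

lemma binom_ratio:
  assumes "m \<le> n"
  shows "real (m choose j) * real n ^ j \<le> real (n choose j) * real m ^ j"
proof (induction j)
  case 0 then show ?case by simp
next
  case (Suc j)
  have key: "real (m - j) * real n \<le> real (n - j) * real m"
  proof (cases "j \<le> m")
    case True
    then have "real (m - j) = real m - real j" "real (n - j) = real n - real j" using assms by auto
    then show ?thesis using assms True by (simp add: algebra_simps mult_left_mono)
  next
    case False then show ?thesis by simp
  qed
  have "real (Suc j) * (real (m choose Suc j) * real n ^ Suc j)
      = real (m - j) * real n * (real (m choose j) * real n ^ j)"
  proof -
    have e: "real (Suc j) * real (m choose Suc j) = real (m-j) * real (m choose j)"
      by (metis choose_suc_eq of_nat_mult)
    show ?thesis by (metis (no_types, opaque_lifting) power_Suc e mult.assoc mult.commute)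
  qed
  also have "\<dots> \<le> real (n - j) * real m * (real (n choose j) * real m ^ j)"
    by (intro mult_mono key Suc) auto
  also have "\<dots> = real (Suc j) * (real (n choose Suc j) * real m ^ Suc j)"
  proof -
    have e: "real (Suc j) * real (n choose Suc j) = real (n-j) * real (n choose j)"
      by (metis choose_suc_eq of_nat_mult)
    show ?thesis by (metis (no_types, opaque_lifting) power_Suc e mult.assoc mult.commute)
  qed
  finally show ?case by (simp del: of_nat_Suc)
qed

lemma pow_expand:
  assumes "finite B"
  shows "(1 + y) ^ card B = (\<Sum>J\<in>Pow B. (y::real) ^ card J)"
proof -
  have "(\<Prod>x\<in>B. y + 1) = (\<Sum>J\<in>Pow B. prod (\<lambda>_. y) J * prod (\<lambda>_. 1) (B - J))"
    by (rule prod_add[OF assms])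
  then show ?thesis by (simp add: add.commute)
qed

lemma count_super:
  assumes "J \<subseteq> {..<n}" "card J \<le> s"
  shows "card {I. I \<subseteq> {..<n} \<and> card I = s \<and> J \<subseteq> I} = (n - card J) choose (s - card J)"
proof -
  have fJ: "finite J" using assms finite_subset by blast
  have "{I. I \<subseteq> {..<n} \<and> card I = s \<and> J \<subseteq> I} = (\<lambda>K. K \<union> J) ` {K. K \<subseteq> {..<n} - J \<and> card K = s - card J}"
  proof (intro set_eqI iffI)
    fix I assume I: "I \<in> {I. I \<subseteq> {..<n} \<and> card I = s \<and> J \<subseteq> I}"
    then have fI: "finite I" using finite_subset by blast
    have "card (I - J) = s - card J" using I fJ by (simp add: card_Diff_subset)
    then show "I \<in> (\<lambda>K. K \<union> J) ` {K. K \<subseteq> {..<n} - J \<and> card K = s - card J}"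
      using I by (intro image_eqI[of _ _ "I - J"]) auto
  next
    fix I assume "I \<in> (\<lambda>K. K \<union> J) ` {K. K \<subseteq> {..<n} - J \<and> card K = s - card J}"
    then obtain K where K: "K \<subseteq> {..<n} - J" "card K = s - card J" "I = K \<union> J" by auto
    have "finite K" using K(1) finite_subset by blast
    then have "card I = s" using K fJ assms(2) by (subst K(3), subst card_Un_disjoint) auto
    then show "I \<in> {I. I \<subseteq> {..<n} \<and> card I = s \<and> J \<subseteq> I}" using K assms by auto
  qed
  also have "card \<dots> = card {K. K \<subseteq> {..<n} - J \<and> card K = s - card J}"
    by (intro card_image inj_onI) blast
  also have "\<dots> = card ({..<n} - J) choose (s - card J)" by (rule n_subsets) auto
  also have "card ({..<n} - J) = n - card J" using assms by (simp add: card_Diff_subset fJ)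
  finally show ?thesis .
qed

lemma sample_space_finite: "finite (sample_space n s)"
  unfolding sample_space_def by (rule finite_subset[of _ "Pow {..<n}"]) auto

lemma mgf_bound:
  assumes A: "A \<subseteq> {..<n}" and sn: "s \<le> n" and n: "n > 0" and y: "y \<ge> 0"
  shows "(\<Sum>I\<in>sample_space n s. (1 + y) ^ card (I \<inter> A))
         \<le> real (n choose s) * (1 + real (card A) / real n * y) ^ s"
proof -
  define \<Omega> where "\<Omega> = sample_space n s"
  define m where "m = card A"
  define p where "p = real m / real n"
  have fA: "finite A" using A finite_subset by blast
  have fO: "finite \<Omega>" unfolding \<Omega>_def by (rule sample_space_finite)
  define c where "c j = y ^ j * real (if j \<le> s then (n - j) choose (s - j) else 0)" for j
  define d where "d j = real (n choose s) * (real (s choose j) * (p * y) ^ j)" for j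
  have "(\<Sum>I\<in>\<Omega>. (1 + y) ^ card (I \<inter> A)) = (\<Sum>I\<in>\<Omega>. \<Sum>J\<in>{J\<in>Pow A. J \<subseteq> I}. y ^ card J)"
  proof (intro sum.cong refl)
    fix I assume "I \<in> \<Omega>"
    have "Pow (I \<inter> A) = {J\<in>Pow A. J \<subseteq> I}" by auto
    then show "(1 + y) ^ card (I \<inter> A) = (\<Sum>J\<in>{J\<in>Pow A. J \<subseteq> I}. y ^ card J)"
      using pow_expand[of "I \<inter> A" y] fA by simp
  qed
  also have "\<dots> = (\<Sum>J\<in>Pow A. \<Sum>I\<in>{I\<in>\<Omega>. J \<subseteq> I}. y ^ card J)"
    by (rule sum.swap_restrict[OF fO]) (use fA in simp)
  also have "\<dots> = (\<Sum>J\<in>Pow A. c (card J))"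
  proof (intro sum.cong refl)
    fix J assume J: "J \<in> Pow A"
    then have J': "J \<subseteq> {..<n}" using A by auto
    have "card {I\<in>\<Omega>. J \<subseteq> I} = (if card J \<le> s then (n - card J) choose (s - card J) else 0)"
    proof (cases "card J \<le> s")
      case True
      have "{I\<in>\<Omega>. J \<subseteq> I} = {I. I \<subseteq> {..<n} \<and> card I = s \<and> J \<subseteq> I}"
        unfolding \<Omega>_def sample_space_def by auto
      then show ?thesis using count_super[OF J' True] True by simp
    next
      case False
      have "{I\<in>\<Omega>. J \<subseteq> I} = {}"
      proof (rule ccontr)
        assume "{I\<in>\<Omega>. J \<subseteq> I} \<noteq> {}"
        then obtain I where I: "I \<in> \<Omega>" "J \<subseteq> I" by auto
        have IU: "I \<subseteq> {..<n}" "card I = s" using I(1) unfolding \<Omega>_def sample_space_def by auto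
        have "finite I" by (rule finite_subset[OF IU(1)]) simp
        then have "card J \<le> card I" using I(2) by (rule card_mono)
        then have "card J \<le> s" using IU(2) by simp
        then show False using False by simp
      qed
      then have "card {I\<in>\<Omega>. J \<subseteq> I} = 0" by (simp only: card.empty)
      then show ?thesis using False by simp
    qed
    then show "(\<Sum>I\<in>{I\<in>\<Omega>. J \<subseteq> I}. y ^ card J) = c (card J)"
      unfolding c_def by simp
  qed
  also have "\<dots> = (\<Sum>j\<in>{..m}. \<Sum>J\<in>{J. J \<in> Pow A \<and> card J = j}. c (card J))"
  proof -
    have im: "card ` Pow A \<subseteq> {..m}" using card_mono[OF fA] by (auto simp: m_def)
    show ?thesis by (rule sum.group[symmetric, OF _ _ im]) (use fA in simp_all)
  qed
  also have "\<dots> = (\<Sum>j\<in>{..m}. real (m choose j) * c j)"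
  proof (intro sum.cong refl)
    fix j
    have "{J. J \<in> Pow A \<and> card J = j} = {J. J \<subseteq> A \<and> card J = j}" by auto
    then have "card {J. J \<in> Pow A \<and> card J = j} = m choose j" using n_subsets[OF fA] m_def by simp
    then show "(\<Sum>J\<in>{J. J \<in> Pow A \<and> card J = j}. c (card J)) = real (m choose j) * c j"
      by simp
  qed
  also have "\<dots> \<le> (\<Sum>j\<in>{..m}. d j)"
  proof (intro sum_mono)
    fix j
    show "real (m choose j) * c j \<le> d j"
    proof (cases "j \<le> s")
      case False
      then have "s choose j = 0" by (intro binomial_eq_0) simp
      then have "d j = 0" unfolding d_def by (simp only: of_nat_0 mult_zero_left mult_zero_right)
      then show ?thesis unfolding c_def using False by simp
    next
      case True
      have mn: "m \<le> n" unfolding m_def using card_mono[OF _ A] by simp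
      have cm: "(n choose s) * (s choose j) = (n choose j) * ((n - j) choose (s - j))"
        by (rule choose_mult[OF True sn])
      have r: "real (m choose j) \<le> real (n choose j) * p ^ j"
      proof -
        have np: "real n ^ j > 0" using n by simp
        have "real (m choose j) \<le> real (n choose j) * real m ^ j / real n ^ j"
          using binom_ratio[OF mn, of j] np by (simp add: pos_le_divide_eq)
        then show ?thesis unfolding p_def by (simp add: power_divide)
      qed
      have "real (m choose j) * c j = real (m choose j) * real ((n - j) choose (s - j)) * y ^ j"
        unfolding c_def using True by simp
      also have "\<dots> \<le> real (n choose j) * p ^ j * real ((n - j) choose (s - j)) * y ^ j"
        by (intro mult_right_mono r) (use y in auto)
      also have "\<dots> = real ((n choose j) * ((n - j) choose (s - j))) * (p * y) ^ j"
        by (simp add: power_mult_distrib)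
      also have "\<dots> = d j" unfolding d_def cm[symmetric] by (simp add: power_mult_distrib)
      finally show ?thesis .
    qed
  qed
  also have "\<dots> \<le> (\<Sum>j\<in>{..max m s}. d j)"
  proof (rule sum_mono2)
    fix j
    have "p \<ge> 0" unfolding p_def by simp
    then show "0 \<le> d j" unfolding d_def using y by simp
  qed auto
  also have "\<dots> = (\<Sum>j\<in>{..s}. d j)"
  proof (rule sum.mono_neutral_right)
    show "\<forall>i\<in>{..max m s} - {..s}. d i = 0"
    proof
      fix i assume "i \<in> {..max m s} - {..s}"
      then have "s < i" by simp
      then have "s choose i = 0" by (rule binomial_eq_0)
      then show "d i = 0" unfolding d_def by (simp only: of_nat_0 mult_zero_left mult_zero_right)
    qed
  qed auto
  also have "\<dots> = real (n choose s) * (p * y + 1) ^ s"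
    unfolding d_def binomial_ring by (simp add: sum_distrib_left)
  finally show ?thesis unfolding \<Omega>_def p_def m_def by (simp add: add.commute)
qed

lemma upper_tail:
  assumes A: "A \<subseteq> {..<n}" and s: "0 < s" "s \<le> n" and g: "g > 0"
    and t: "t \<ge> real s * real (card A) / real n + g"
  shows "real (card {I\<in>sample_space n s. t \<le> real (card (I \<inter> A))})
         \<le> real (n choose s) * exp (- 2 * g\<^sup>2 / real s)"
proof -
  define \<Omega> where "\<Omega> = sample_space n s"
  have n: "n > 0" using s by simp
  define h where "h = 4 * g / real s"
  have h: "h > 0" unfolding h_def using g s by simp
  define p where "p = real (card A) / real n"
  have p: "p \<ge> 0" unfolding p_def by simp
  define L where "L = ln (1 + p * (exp h - 1))"
  have pos: "1 + p * (exp h - 1) > 0" using p h by (intro add_pos_nonneg mult_nonneg_nonneg) auto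
  have fO: "finite \<Omega>" unfolding \<Omega>_def by (rule sample_space_finite)
  define E where "E = {I\<in>\<Omega>. t \<le> real (card (I \<inter> A))}"
  have "real (card E) * exp (h * t) = (\<Sum>I\<in>E. exp (h * t))" by simp
  also have "\<dots> \<le> (\<Sum>I\<in>E. exp (h * real (card (I \<inter> A))))"
    by (intro sum_mono) (use h in \<open>auto simp: E_def\<close>)
  also have "\<dots> \<le> (\<Sum>I\<in>\<Omega>. exp (h * real (card (I \<inter> A))))"
    by (rule sum_mono2) (use fO in \<open>auto simp: E_def\<close>)
  also have "\<dots> = (\<Sum>I\<in>\<Omega>. (1 + (exp h - 1)) ^ card (I \<inter> A))"
    by (intro sum.cong refl) (simp add: exp_of_nat_mult[symmetric] mult.commute)
  also have "\<dots> \<le> real (n choose s) * (1 + p * (exp h - 1)) ^ s"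
    unfolding \<Omega>_def p_def by (rule mgf_bound[OF A s(2) n]) (use h in auto)
  also have "(1 + p * (exp h - 1)) ^ s = exp (real s * L)"
    unfolding L_def exp_of_nat_mult using pos by simp
  finally have c: "real (card E) * exp (h * t) \<le> real (n choose s) * exp (real s * L)" .
  have hl: "- h * p + L \<le> h\<^sup>2 / 8"
    unfolding L_def by (rule Hoeffdings_lemma_aux) (use h p in auto)
  have sp: "real s * p = real s * real (card A) / real n" unfolding p_def by simp
  have "real s * L - h * t \<le> real s * (h * p + h\<^sup>2 / 8) - h * (real s * p + g)"
  proof -
    have "real s * L \<le> real s * (h * p + h\<^sup>2 / 8)" using hl by (intro mult_left_mono) auto
    moreover have "h * t \<ge> h * (real s * p + g)" using t h sp by (intro mult_left_mono) auto
    ultimately show ?thesis by linarith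
  qed
  also have "\<dots> = - 2 * g\<^sup>2 / real s"
    unfolding h_def using s by (simp add: field_simps power2_eq_square)
  finally have e: "real s * L - h * t \<le> - 2 * g\<^sup>2 / real s" .
  have "real (card E) = real (card E) * exp (h * t) * exp (- (h * t))"
    by (simp add: exp_minus field_simps)
  also have "\<dots> \<le> real (n choose s) * exp (real s * L) * exp (- (h * t))"
    by (intro mult_right_mono c) auto
  also have "\<dots> = real (n choose s) * exp (real s * L - h * t)"
    by (simp add: exp_diff exp_minus field_simps)
  also have "\<dots> \<le> real (n choose s) * exp (- 2 * g\<^sup>2 / real s)"
    using e by (intro mult_left_mono) auto
  finally show ?thesis unfolding E_def \<Omega>_def .
qed

lemma lower_tail:
  assumes A: "A \<subseteq> {..<n}" and s: "0 < s" "s \<le> n" and g: "g > 0"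
    and t: "t \<le> real s * real (card A) / real n - g"
  shows "real (card {I\<in>sample_space n s. real (card (I \<inter> A)) \<le> t})
         \<le> real (n choose s) * exp (- 2 * g\<^sup>2 / real s)"
proof -
  define A' where "A' = {..<n} - A"
  have n: "n > 0" using s by simp
  have fA: "finite A" using A finite_subset by blast
  have cA': "card A' = n - card A" unfolding A'_def using A fA by (simp add: card_Diff_subset)
  have cAn: "card A \<le> n" using card_mono[OF _ A] by simp
  have sub: "{I\<in>sample_space n s. real (card (I \<inter> A)) \<le> t}
           \<subseteq> {I\<in>sample_space n s. real s - t \<le> real (card (I \<inter> A'))}"
  proof safe
    fix I assume I: "I \<in> sample_space n s" "real (card (I \<inter> A)) \<le> t"
    then have IU: "I \<subseteq> {..<n}" "card I = s" unfolding sample_space_def by auto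
    have fI: "finite I" using IU finite_subset by blast
    have "I \<inter> A' = I - (I \<inter> A)" unfolding A'_def using IU by auto
    then have "card (I \<inter> A') = card I - card (I \<inter> A)" using fI by (simp add: card_Diff_subset)
    moreover have "card (I \<inter> A) \<le> card I" using fI by (simp add: card_mono)
    ultimately have "real (card (I \<inter> A')) = real s - real (card (I \<inter> A))" using IU by simp
    then show "real s - t \<le> real (card (I \<inter> A'))" using I by simp
  qed
  have "real (card {I\<in>sample_space n s. real (card (I \<inter> A)) \<le> t})
       \<le> real (card {I\<in>sample_space n s. real s - t \<le> real (card (I \<inter> A'))})"
    using card_mono[OF _ sub] sample_space_finite by simp
  also have "\<dots> \<le> real (n choose s) * exp (- 2 * g\<^sup>2 / real s)"
  proof (rule upper_tail[OF _ s g])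
    show "A' \<subseteq> {..<n}" unfolding A'_def by auto
    have "real (card A') = real n - real (card A)" using cA' cAn by simp
    then have "real s * real (card A') / real n = (real s * real n - real s * real (card A)) / real n"
      by (simp add: right_diff_distrib)
    also have "\<dots> = real s - real s * real (card A) / real n"
      using n by (simp add: diff_divide_distrib)
    finally have "real s * real (card A') / real n = real s - real s * real (card A) / real n" .
    then show "real s * real (card A') / real n + g \<le> real s - t" using t by simp
  qed
  finally show ?thesis .
qed

lemma sorted_nth_filter:
  assumes "sorted ys" "i < length ys" "\<And>x y. x \<le> y \<Longrightarrow> P y \<Longrightarrow> P x"
  shows "P (ys ! i) \<longleftrightarrow> i < length (filter P ys)"
  using assms(1,2)
proof (induction ys arbitrary: i)
  case Nil then show ?case by simp
next
  case (Cons y ys)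
  have none: "filter P ys = []" if "\<not> P y"
  proof -
    have "\<not> P z" if "z \<in> set ys" for z
      using Cons.prems(1) that assms(3) \<open>\<not> P y\<close> by auto
    then show ?thesis by (simp add: filter_empty_conv)
  qed
  show ?case
  proof (cases i)
    case 0 then show ?thesis using none by auto
  next
    case (Suc i')
    have IH: "P (ys ! i') \<longleftrightarrow> i' < length (filter P ys)"
      using Cons Suc by auto
    show ?thesis
    proof (cases "P y")
      case True then show ?thesis using IH Suc by simp
    next
      case False
      have "ys ! i' \<in> set ys" using Cons.prems(2) Suc by simp
      then have "\<not> P (ys ! i')" using Cons.prems(1) assms(3) False by auto
      then show ?thesis using none[OF False] Suc False by simp
    qed
  qed
qed

lemma count_sort: "length (filter P (sort xs)) = length (filter P xs)"
  by (metis mset_filter mset_sort size_mset)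

definition Aset :: "'a list \<Rightarrow> ('a \<Rightarrow> bool) \<Rightarrow> nat set" where
  "Aset X P = {j. j < length X \<and> P (X ! j)}"

lemma ostat_X:
  fixes X :: "'a::linorder list"
  assumes "1 \<le> i" "i \<le> length X" "\<And>x y. x \<le> y \<Longrightarrow> P y \<Longrightarrow> P x"
  shows "P (ostat X i) \<longleftrightarrow> i - 1 < card (Aset X P)"
proof -
  have "P (ostat X i) \<longleftrightarrow> i - 1 < length (filter P (sort X))"
    unfolding ostat_def by (rule sorted_nth_filter) (use assms in auto)
  also have "length (filter P (sort X)) = card (Aset X P)"
    unfolding Aset_def count_sort by (rule length_filter_conv_card)
  finally show ?thesis .
qed

lemma ostat_sample:
  fixes X :: "'a::linorder list"
  assumes I: "I \<in> sample_space (length X) s" and "1 \<le> i" "i \<le> s"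
    and "\<And>x y. x \<le> y \<Longrightarrow> P y \<Longrightarrow> P x"
  shows "P (ostat (sample X I) i) \<longleftrightarrow> i - 1 < card (I \<inter> Aset X P)"
proof -
  have IU: "I \<subseteq> {..<length X}" "card I = s" using I unfolding sample_space_def by auto
  have fI: "finite I" using IU finite_subset by blast
  have len: "length (sample X I) = s" unfolding sample_def using IU fI by simp
  have "P (ostat (sample X I) i) \<longleftrightarrow> i - 1 < length (filter P (sort (sample X I)))"
    unfolding ostat_def by (rule sorted_nth_filter) (use assms len in auto)
  also have "length (filter P (sort (sample X I))) = length (filter P (sample X I))"
    by (rule count_sort)
  also have "\<dots> = card ({x. P (X ! x)} \<inter> I)"
    unfolding sample_def filter_map length_map
    by (subst distinct_length_filter) (use fI in \<open>auto simp: o_def\<close>)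
  also have "{x. P (X ! x)} \<inter> I = I \<inter> Aset X P" unfolding Aset_def using IU by auto
  finally show ?thesis .
qed


theorem lemma3p1:
  fixes X :: "'a::linorder list" and n k s :: nat and g :: real
  assumes "n = length X" and "n \<ge> 2"
    and "1 \<le> k" and "k \<le> n" and "1 \<le> s" and "s \<le> n - 1" and "g > 0"
  defines "P \<equiv> measure_pmf.prob (pmf_of_set (sample_space n s))"
  defines "u \<equiv> (\<lambda>I. ostat (sample X I) (nat (i_u n k s g)))"
  defines "v \<equiv> (\<lambda>I. ostat (sample X I) (nat (i_v n k s g)))"
  shows
   "(i_u n k s g = \<lceil>real k * real s / real n - g\<rceil> \<longrightarrow>
       P {I. ostat X k < u I} \<le> exp (- 2 * g\<^sup>2 / real s))
  \<and> P {I. u I < ostat X (nat (k_l n k s g))} \<le> exp (- 2 * g\<^sup>2 / real s)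
  \<and> (i_v n k s g = \<lceil>real k * real s / real n + g\<rceil> \<longrightarrow>
       P {I. v I < ostat X k} \<le> exp (- 2 * g\<^sup>2 / real s))
  \<and> P {I. ostat X (nat (k_r n k s g)) < v I} \<le> exp (- 2 * g\<^sup>2 / real s)
  \<and> (i_u n k s g \<noteq> \<lceil>real k * real s / real n - g\<rceil> \<longleftrightarrow> real k \<le> g * real n / real s)
  \<and> (i_v n k s g \<noteq> \<lceil>real k * real s / real n + g\<rceil> \<longleftrightarrow> real n < real k + g * real n / real s)"
proof -
  note nX = assms(1)
  have s0: "0 < s" and sn: "s \<le> n" using assms by auto
  have rn: "real n > 0" and rs: "real s > 0" using assms by auto
  have g: "g > 0" by fact
  define \<Omega> where "\<Omega> = sample_space n s"
  define B0 where "B0 = exp (- 2 * g\<^sup>2 / real s)"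
  have B0: "B0 > 0" unfolding B0_def by simp
  have fO: "finite \<Omega>" unfolding \<Omega>_def by (rule sample_space_finite)
  have cO: "card \<Omega> = n choose s"
  proof -
    have "card \<Omega> = card {I. I \<subseteq> {..<n} \<and> card I = s}" unfolding \<Omega>_def sample_space_def by simp
    also have "\<dots> = card {..<n} choose s" by (rule n_subsets) simp
    finally show ?thesis by simp
  qed
  have Cpos: "n choose s > 0" using sn by (rule zero_less_binomial)
  have One: "\<Omega> \<noteq> {}" using cO Cpos by auto
  have Pb: "P {I. Q I} \<le> B0" if "real (card {I\<in>\<Omega>. Q I}) \<le> real (n choose s) * B0" for Q
  proof -
    have "P {I. Q I} = real (card (\<Omega> \<inter> {I. Q I})) / real (card \<Omega>)"
      unfolding P_def \<Omega>_def[symmetric] by (rule measure_pmf_of_set[OF One fO])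
    also have "\<Omega> \<inter> {I. Q I} = {I\<in>\<Omega>. Q I}" by auto
    finally show ?thesis using that Cpos cO by (simp add: divide_le_eq mult.commute)
  qed
  have Pb0: "P {I. Q I} \<le> B0" if "\<And>I. I \<in> \<Omega> \<Longrightarrow> \<not> Q I" for Q
  proof (rule Pb)
    have "{I\<in>\<Omega>. Q I} = {}" using that by auto
    then have "card {I\<in>\<Omega>. Q I} = 0" by (simp only: card.empty)
    then show "real (card {I\<in>\<Omega>. Q I}) \<le> real (n choose s) * B0" using B0 by simp
  qed
  have cmono: "real (card {I\<in>\<Omega>. Q I}) \<le> real (card {I\<in>\<Omega>. R I})"
    if "\<And>I. I \<in> \<Omega> \<Longrightarrow> Q I \<Longrightarrow> R I" for Q R
    using that fO by (intro of_nat_mono card_mono) auto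
  have OX: "I \<in> sample_space (length X) s" if "I \<in> \<Omega>" for I
    using that nX unfolding \<Omega>_def by simp
  have AsetU: "Aset X Q \<subseteq> {..<n}" for Q unfolding Aset_def nX by auto
  have fAset: "finite (Aset X Q)" for Q using AsetU finite_subset by blast

  define c where "c = real k * real s / real n"
  have c_le: "c \<le> real s" unfolding c_def using rn assms(4)
    by (simp add: divide_le_eq mult_right_mono mult.commute)
  have c_pos: "c > 0" unfolding c_def using rn rs assms(3) by simp

  define ku where "ku = nat (i_u n k s g)"
  have iu_ge: "i_u n k s g \<ge> 1" unfolding i_u_def by simp
  have rku: "real ku = real_of_int (i_u n k s g)" unfolding ku_def using iu_ge by simp
  have ku1: "1 \<le> ku" using iu_ge unfolding ku_def by simp
  have kus: "ku \<le> s"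
  proof -
    have "\<lceil>c - g\<rceil> \<le> int s" using c_le g by (simp add: ceiling_le_iff)
    then have "i_u n k s g \<le> int s" unfolding i_u_def c_def using s0 by simp
    then show ?thesis unfolding ku_def by simp
  qed
  have ku_ge: "real ku \<ge> c - g"
  proof -
    have "real_of_int \<lceil>c - g\<rceil> \<le> real_of_int (i_u n k s g)" unfolding i_u_def c_def by simp
    then show ?thesis using rku le_of_int_ceiling[of "c - g"] by linarith
  qed
  have ku_lt: "real ku - 1 < c - g" if "i_u n k s g = \<lceil>c - g\<rceil>"
    using rku that ceiling_correct[of "c - g"] by simp

  define kv where "kv = nat (i_v n k s g)"
  have iv_ge: "i_v n k s g \<ge> 1"
  proof -
    have "1 \<le> \<lceil>c + g\<rceil>" using c_pos g by (simp add: le_ceiling_iff)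
    then show ?thesis unfolding i_v_def c_def using s0 by simp
  qed
  have rkv: "real kv = real_of_int (i_v n k s g)" unfolding kv_def using iv_ge by simp
  have kv1: "1 \<le> kv" using iv_ge unfolding kv_def by simp
  have kvs: "kv \<le> s" unfolding kv_def i_v_def by simp
  have kv_lt: "real kv - 1 < c + g"
  proof -
    have "real_of_int (i_v n k s g) \<le> real_of_int \<lceil>c + g\<rceil>" unfolding i_v_def c_def by simp
    then show ?thesis using rkv ceiling_correct[of "c + g"] by simp
  qed
  have kv_ge: "real kv \<ge> c + g" if "i_v n k s g = \<lceil>c + g\<rceil>"
    using rkv that ceiling_correct[of "c + g"] by simp

  define d where "d = 2 * g * real n / real s"
  define kl where "kl = nat (k_l n k s g)"
  have kl_ge: "k_l n k s g \<ge> 1" unfolding k_l_def by simp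
  have rkl: "real kl = real_of_int (k_l n k s g)" unfolding kl_def using kl_ge by simp
  have kl1: "1 \<le> kl" using kl_ge unfolding kl_def by simp
  have kln: "kl \<le> n"
  proof -
    have "\<lceil>real k - d\<rceil> \<le> int k" using g rn rs unfolding d_def by (simp add: ceiling_le_iff)
    then have "k_l n k s g \<le> int k" unfolding k_l_def d_def using assms(3) by simp
    then show ?thesis unfolding kl_def using assms(4) by simp
  qed
  have kl_lt: "real kl - 1 < real k - d" if "kl \<ge> 2"
  proof -
    have "k_l n k s g \<ge> 2" using that rkl by simp
    then have "k_l n k s g = \<lceil>real k - d\<rceil>" unfolding k_l_def d_def by simp
    then show ?thesis using rkl ceiling_correct[of "real k - d"] by simp
  qed

  define kr where "kr = nat (k_r n k s g)"
  have kr_ge: "k_r n k s g \<ge> 1"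
  proof -
    have "d > 0" unfolding d_def using g rn rs by simp
    then have "1 \<le> \<lceil>real k + d\<rceil>" using assms(3) by (simp add: le_ceiling_iff)
    then show ?thesis unfolding k_r_def d_def using assms(2) by simp
  qed
  have rkr: "real kr = real_of_int (k_r n k s g)" unfolding kr_def using kr_ge by simp
  have kr1: "1 \<le> kr" using kr_ge unfolding kr_def by simp
  have krn: "kr \<le> n" unfolding kr_def k_r_def by simp
  have kr_cases: "kr = n \<or> real kr \<ge> real k + d"
  proof (cases "\<lceil>real k + d\<rceil> \<le> int n")
    case True
    then have "k_r n k s g = \<lceil>real k + d\<rceil>" unfolding k_r_def d_def by simp
    then show ?thesis using rkr ceiling_correct[of "real k + d"] by simp
  next
    case False
    then have "k_r n k s g = int n" unfolding k_r_def d_def by simp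
    then show ?thesis unfolding kr_def by simp
  qed
  have sd: "real s / real n * d = 2 * g" unfolding d_def using rn rs by (simp add: field_simps)

  have partA: "P {I. ostat X k < u I} \<le> B0" if hu: "i_u n k s g = \<lceil>c - g\<rceil>"
  proof (rule Pb)
    define a where "a = ostat X k"
    define A where "A = Aset X (\<lambda>y. y \<le> a)"
    have "k - 1 < card A" unfolding A_def
      using ostat_X[of k X "\<lambda>y. y \<le> a"] assms(3,4) nX unfolding a_def by auto
    then have kA: "real k \<le> real (card A)" by simp
    have "real (card {I\<in>\<Omega>. ostat X k < u I}) \<le> real (card {I\<in>\<Omega>. real (card (I \<inter> A)) \<le> c - g})"
    proof (rule cmono)
      fix I assume I: "I \<in> \<Omega>" "ostat X k < u I"
      have "\<not> (u I \<le> a)" using I(2) unfolding a_def by simp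
      then have "\<not> (ku - 1 < card (I \<inter> A))"
        using ostat_sample[OF OX[OF I(1)] ku1 kus, of "\<lambda>y. y \<le> a"]
        unfolding u_def ku_def A_def by auto
      then have "real (card (I \<inter> A)) \<le> real ku - 1" using ku1 by linarith
      then show "real (card (I \<inter> A)) \<le> c - g" using ku_lt[OF hu] by simp
    qed
    also have "\<dots> \<le> real (n choose s) * B0" unfolding \<Omega>_def B0_def
    proof (rule lower_tail[OF AsetU[of "\<lambda>y. y \<le> a", folded A_def] s0 sn g])
      have "c \<le> real s * real (card A) / real n" unfolding c_def using kA rn rs
        by (simp add: divide_right_mono mult_left_mono)
      then show "c - g \<le> real s * real (card A) / real n - g" by simp
    qed
    finally show "real (card {I\<in>\<Omega>. ostat X k < u I}) \<le> real (n choose s) * B0" .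
  qed
  have partB: "P {I. u I < ostat X kl} \<le> B0"
  proof -
    define b where "b = ostat X kl"
    define B where "B = Aset X (\<lambda>y. y < b)"
    have "\<not> (kl - 1 < card B)" unfolding B_def
      using ostat_X[of kl X "\<lambda>y. y < b"] kl1 kln nX unfolding b_def by auto
    then have Bkl: "real (card B) \<le> real kl - 1" using kl1 by linarith
    have ev: "ku - 1 < card (I \<inter> B)" if I: "I \<in> \<Omega>" "u I < b" for I
      using ostat_sample[OF OX[OF I(1)] ku1 kus, of "\<lambda>y. y < b"] I(2)
      unfolding u_def ku_def B_def by auto
    show ?thesis
    proof (cases "card B = 0")
      case True
      show ?thesis unfolding b_def[symmetric]
      proof (rule Pb0)
        fix I assume I: "I \<in> \<Omega>"
        have "B = {}" using True fAset[of "\<lambda>y. y < b"] unfolding B_def by simp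
        then show "\<not> u I < b" using ev[OF I] by auto
      qed
    next
      case False
      then have "kl \<ge> 2" using Bkl by linarith
      then have Bd: "real (card B) < real k - d" using kl_lt Bkl by linarith
      show ?thesis unfolding b_def[symmetric]
      proof (rule Pb)
        have "real (card {I\<in>\<Omega>. u I < b}) \<le> real (card {I\<in>\<Omega>. c - g \<le> real (card (I \<inter> B))})"
        proof (rule cmono)
          fix I assume I: "I \<in> \<Omega>" "u I < b"
          have "real ku \<le> real (card (I \<inter> B))" using ev[OF I] ku1 by linarith
          then show "c - g \<le> real (card (I \<inter> B))" using ku_ge by linarith
        qed
        also have "\<dots> \<le> real (n choose s) * B0" unfolding \<Omega>_def B0_def
        proof (rule upper_tail[OF AsetU[of "\<lambda>y. y < b", folded B_def] s0 sn g])
          have "real s / real n * real (card B) \<le> real s / real n * (real k - d)"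
            using Bd rn rs by (intro mult_left_mono) auto
          also have "\<dots> = c - 2 * g" using sd rn unfolding c_def by (simp add: field_simps)
          finally show "real s * real (card B) / real n + g \<le> c - g" by simp
        qed
        finally show "real (card {I\<in>\<Omega>. u I < b}) \<le> real (n choose s) * B0" .
      qed
    qed
  qed

  have partC: "P {I. v I < ostat X k} \<le> B0" if hv: "i_v n k s g = \<lceil>c + g\<rceil>"
  proof (rule Pb)
    define a where "a = ostat X k"
    define B where "B = Aset X (\<lambda>y. y < a)"
    have "\<not> (k - 1 < card B)" unfolding B_def
      using ostat_X[of k X "\<lambda>y. y < a"] assms(3,4) nX unfolding a_def by auto
    then have kB: "real (card B) \<le> real k" by simp
    have "real (card {I\<in>\<Omega>. v I < ostat X k}) \<le> real (card {I\<in>\<Omega>. c + g \<le> real (card (I \<inter> B))})"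
    proof (rule cmono)
      fix I assume I: "I \<in> \<Omega>" "v I < ostat X k"
      have "kv - 1 < card (I \<inter> B)"
        using ostat_sample[OF OX[OF I(1)] kv1 kvs, of "\<lambda>y. y < a"] I(2)
        unfolding v_def kv_def B_def a_def by auto
      then have "real kv \<le> real (card (I \<inter> B))" using kv1 by linarith
      then show "c + g \<le> real (card (I \<inter> B))" using kv_ge[OF hv] by simp
    qed
    also have "\<dots> \<le> real (n choose s) * B0" unfolding \<Omega>_def B0_def
    proof (rule upper_tail[OF AsetU[of "\<lambda>y. y < a", folded B_def] s0 sn g])
      have "real s * real (card B) / real n \<le> c" unfolding c_def using kB rn rs
        by (simp add: divide_right_mono mult_left_mono)
      then show "real s * real (card B) / real n + g \<le> c + g" by simp
    qed
    finally show "real (card {I\<in>\<Omega>. v I < ostat X k}) \<le> real (n choose s) * B0" .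
  qed

  have partD: "P {I. ostat X kr < v I} \<le> B0"
  proof -
    define b where "b = ostat X kr"
    define A where "A = Aset X (\<lambda>y. y \<le> b)"
    have "kr - 1 < card A" unfolding A_def
      using ostat_X[of kr X "\<lambda>y. y \<le> b"] kr1 krn nX unfolding b_def by auto
    then have krA: "real kr \<le> real (card A)" by simp
    have ev: "\<not> (kv - 1 < card (I \<inter> A))" if I: "I \<in> \<Omega>" "b < v I" for I
    proof -
      have "\<not> (v I \<le> b)" using I(2) by simp
      then show ?thesis
        using ostat_sample[OF OX[OF I(1)] kv1 kvs, of "\<lambda>y. y \<le> b"]
        unfolding v_def kv_def A_def by auto
    qed
    show ?thesis
    proof (cases "kr = n")
      case True
      show ?thesis unfolding b_def[symmetric]
      proof (rule Pb0)
        fix I assume I: "I \<in> \<Omega>"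
        have "card A \<ge> n" using krA True by simp
        have AU: "A \<subseteq> {..<n}" using AsetU[of "\<lambda>y. y \<le> b"] unfolding A_def .
        have "card A \<le> n" using card_mono[OF _ AU] by simp
        then have "card A = card {..<n}" using \<open>card A \<ge> n\<close> by simp
        then have "A = {..<n}" using card_subset_eq[OF _ AU] by simp
        moreover have "I \<subseteq> {..<n}" "card I = s" using I unfolding \<Omega>_def sample_space_def by auto
        ultimately have "card (I \<inter> A) = s" by (simp add: Int_absorb2)
        then show "\<not> b < v I" using ev[OF I] kvs kv1 by auto
      qed
    next
      case False
      then have krd: "real kr \<ge> real k + d" using kr_cases by simp
      show ?thesis unfolding b_def[symmetric]
      proof (rule Pb)
        have "real (card {I\<in>\<Omega>. b < v I}) \<le> real (card {I\<in>\<Omega>. real (card (I \<inter> A)) \<le> c + g})"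
        proof (rule cmono)
          fix I assume I: "I \<in> \<Omega>" "b < v I"
          have "real (card (I \<inter> A)) \<le> real kv - 1" using ev[OF I] kv1 by linarith
          then show "real (card (I \<inter> A)) \<le> c + g" using kv_lt by linarith
        qed
        also have "\<dots> \<le> real (n choose s) * B0" unfolding \<Omega>_def B0_def
        proof (rule lower_tail[OF AsetU[of "\<lambda>y. y \<le> b", folded A_def] s0 sn g])
          have "c + 2 * g = real s / real n * (real k + d)" using sd rn unfolding c_def by (simp add: field_simps)
          also have "\<dots> \<le> real s / real n * real (card A)"
            using krd krA rn rs by (intro mult_left_mono) auto
          finally show "c + g \<le> real s * real (card A) / real n - g" by simp
        qed
        finally show "real (card {I\<in>\<Omega>. b < v I}) \<le> real (n choose s) * B0" .
      qed
    qed
  qed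

  have partE1: "i_u n k s g \<noteq> \<lceil>c - g\<rceil> \<longleftrightarrow> real k \<le> g * real n / real s"
  proof -
    have "i_u n k s g \<noteq> \<lceil>c - g\<rceil> \<longleftrightarrow> \<lceil>c - g\<rceil> < 1" 
    proof -
      have mx: "\<And>x::int. max x 1 \<noteq> x \<longleftrightarrow> x < 1" by (auto simp: max_def)
      show ?thesis unfolding i_u_def c_def by (rule mx)
    qed
    also have "\<dots> \<longleftrightarrow> \<lceil>c - g\<rceil> \<le> 0" by linarith
    also have "\<dots> \<longleftrightarrow> c \<le> g" by (simp add: ceiling_le_zero)
    also have "\<dots> \<longleftrightarrow> real k \<le> g * real n / real s"
      unfolding c_def using rn rs by (simp add: field_simps)
    finally show ?thesis .
  qed
  have partE2: "i_v n k s g \<noteq> \<lceil>c + g\<rceil> \<longleftrightarrow> real n < real k + g * real n / real s"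
  proof -
    have "i_v n k s g \<noteq> \<lceil>c + g\<rceil> \<longleftrightarrow> int s < \<lceil>c + g\<rceil>" 
    proof -
      have mn: "\<And>x::int. min x (int s) \<noteq> x \<longleftrightarrow> int s < x" by (auto simp: min_def)
      show ?thesis unfolding i_v_def c_def by (rule mn)
    qed
    also have "\<dots> \<longleftrightarrow> real s < c + g" by (simp add: less_ceiling_iff)
    also have "\<dots> \<longleftrightarrow> real n < real k + g * real n / real s"
      unfolding c_def using rn rs by (simp add: field_simps)
    finally show ?thesis .
  qed
  have pA: "i_u n k s g = \<lceil>real k * real s / real n - g\<rceil> \<longrightarrow>
       P {I. ostat X k < u I} \<le> exp (- 2 * g\<^sup>2 / real s)"
    using partA unfolding B0_def c_def by (intro impI)
  have pC: "i_v n k s g = \<lceil>real k * real s / real n + g\<rceil> \<longrightarrow>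
       P {I. v I < ostat X k} \<le> exp (- 2 * g\<^sup>2 / real s)"
    using partC unfolding B0_def c_def by (intro impI)
  show ?thesis
    apply (intro conjI)
    subgoal by (rule pA)
    subgoal using partB unfolding B0_def kl_def .
    subgoal by (rule pC)
    subgoal using partD unfolding B0_def kr_def .
    subgoal using partE1 unfolding c_def .
    subgoal using partE2 unfolding c_def .
    done
qed

end
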